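(* Let $(\mathbf{x}^*,\boldsymbol{\lambda}^* )$ be a saddle point of the problem, i.e. $\mathcal{A}(\mathbf{x}^* )=\mathbf{b}$ and $-\mathcal{A}^T(\boldsymbol{\lambda}^* )\in\partial f(\mathbf{x}^* )$, and let $\{\mathbf{x}^k,\mathbf{z}^k,\boldsymbol{\lambda}^k\}$ be generated by the Fast PALM algorithm. Then for every $K>0$, $$f(\mathbf{x}^{K+1})-f(\mathbf{x}^* )+\langle\boldsymbol{\lambda}^*,\mathcal{A}(\mathbf{x}^{K+1})-\mathbf{b}\rangle+\frac12\|\mathcal{A}(\mathbf{x}^{K+1})-\mathbf{b}\|^2\le\frac{2}{(K+2)^2}\Bigl(L\|\mathbf{z}^0-\mathbf{x}^*\|^2+\|\boldsymbol{\lambda}^0-\boldsymbol{\lambda}^*\|^2\Bigr).$$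
   Context: Setting: finite-dimensional real inner product spaces with induced norms $\|\cdot\|$. Problem: $\min_{\mathbf{x}} f(\mathbf{x})=g(\mathbf{x})+h(\mathbf{x})$ subject to $\mathcal{A}(\mathbf{x})=\mathbf{b}$, where $g,h$ are proper convex lower semicontinuous, $g$ is differentiable with $L$-Lipschitz gradient ($L>0$), $\mathcal{A}$ is linear with adjoint $\mathcal{A}^T$. Fast PALM: given $\mathbf{x}^0,\mathbf{z}^0,\boldsymbol{\lambda}^0$ and $\theta^{(0)}=\beta^{(0)}=1$, for $k=0,1,2,\dots$: $\mathbf{y}^{k+1}=(1-\theta^{(k)})\mathbf{x}^k+\theta^{(k)}\mathbf{z}^k$; $\mathbf{z}^{k+1}=\arg\min_{\mathbf{x}}\ \langle\nabla g(\mathbf{y}^{k+1}),\mathbf{x}\rangle+h(\mathbf{x})+\langle\boldsymbol{\lambda}^k,\mathcal{A}(\mathbf{x})\rangle+\frac{\beta^{(k)}}{2}\|\mathcal{A}(\mathbf{x})-\mathbf{b}\|^2+\frac{L\theta^{(k)}}{2}\|\mathbf{x}-\mathbf{z}^k\|^2$; $\mathbf{x}^{k+1}=(1-\theta^{(k)})\mathbf{x}^k+\theta^{(k)}\mathbf{z}^{k+1}$; $\boldsymbol{\lambda}^{k+1}=\boldsymbol{\lambda}^k+\beta^{(k)}(\mathcal{A}(\mathbf{z}^{k+1})-\mathbf{b})$; $\theta^{(k+1)}=\frac{-(\theta^{(k)})^2+\sqrt{(\theta^{(k)})^4+4(\theta^{(k)})^2}}{2}$; $\beta^{(k+1)}=1/\theta^{(k+1)}$.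 (In the paper the right-hand side is written $\frac{2}{(K+2)^2}(LD_{\mathbf{x}^*}^2+D_{\boldsymbol{\lambda}^*}^2)$, with the initialization $\mathbf{z}^0=\mathbf{x}^0$ implicitly making $D_{\mathbf{x}^*}=\|\mathbf{x}^0-\mathbf{x}^*\|=\|\mathbf{z}^0-\mathbf{x}^*\|$ and $D_{\boldsymbol{\lambda}^*}=\|\boldsymbol{\lambda}^0-\boldsymbol{\lambda}^*\|$.) *)

theory Defs
  imports "HOL-Analysis.Analysis" "HOL-Library.Extended_Real"
begin

definition proper_fun :: "('a \<Rightarrow> ereal) \<Rightarrow> bool" where
  "proper_fun h \<longleftrightarrow> (\<forall>x. h x \<noteq> -\<infinity>) \<and> (\<exists>x. h x \<noteq> \<infinity>)"

definition convex_fun :: "('a::real_vector \<Rightarrow> ereal) \<Rightarrow> bool" where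
  "convex_fun h \<longleftrightarrow> (\<forall>x y t. 0 \<le> t \<and> t \<le> 1 \<longrightarrow>
      h ((1 - t) *\<^sub>R x + t *\<^sub>R y) \<le> ereal (1 - t) * h x + ereal t * h y)"

definition lsc_fun :: "('a::topological_space \<Rightarrow> ereal) \<Rightarrow> bool" where
  "lsc_fun h \<longleftrightarrow> (\<forall>x. h x \<le> Liminf (at x) h)"

definition subdiff :: "('a::real_inner \<Rightarrow> ereal) \<Rightarrow> 'a \<Rightarrow> 'a set" where
  "subdiff f x = {s. \<forall>y. f x + ereal (s \<bullet> (y - x)) \<le> f y}"

end

theory Submission
  imports Defs
begin

lemma line_deriv:
  fixes g :: "'a::euclidean_space \<Rightarrow> real"
  assumes g_grad: "\<And>u. (g has_derivative (\<lambda>v. G u \<bullet> v)) (at u)"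
  shows "((\<lambda>t. g (y + t *\<^sub>R d)) has_real_derivative (G (y + t *\<^sub>R d) \<bullet> d)) (at t within S)"
proof -
  have "((\<lambda>t. y + t *\<^sub>R d) has_derivative (\<lambda>s. s *\<^sub>R d)) (at t within S)"
    by (auto intro!: derivative_eq_intros)
  from has_derivative_compose[OF this g_grad]
  have "((\<lambda>t. g (y + t *\<^sub>R d)) has_derivative (\<lambda>s. G (y + t *\<^sub>R d) \<bullet> (s *\<^sub>R d))) (at t within S)" .
  then show ?thesis unfolding has_field_derivative_def
    by (rule has_derivative_eq_rhs) (simp add: fun_eq_iff mult.commute)
qed

lemma grad_ineq:
  fixes g :: "'a::euclidean_space \<Rightarrow> real"
  assumes g_convex: "convex_on UNIV g"
    and g_grad: "\<And>u. (g has_derivative (\<lambda>v. G u \<bullet> v)) (at u)"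
  shows "g y + G y \<bullet> (x - y) \<le> g x"
proof -
  define d where "d = x - y"
  have cv: "convex_on UNIV (\<lambda>t::real. g (y + t *\<^sub>R d))"
  proof (rule convex_onI)
    fix t :: real and a c
    assume "0 < t" "t < 1"
    have "y + ((1 - t) *\<^sub>R a + t *\<^sub>R c) *\<^sub>R d = (1 - t) *\<^sub>R (y + a *\<^sub>R d) + t *\<^sub>R (y + c *\<^sub>R d)"
      by (simp add: algebra_simps)
    then show "g (y + ((1 - t) *\<^sub>R a + t *\<^sub>R c) *\<^sub>R d) \<le> (1 - t) * g (y + a *\<^sub>R d) + t * g (y + c *\<^sub>R d)"
      using convex_onD[OF g_convex, of t "y + a *\<^sub>R d" "y + c *\<^sub>R d"] \<open>0 < t\<close> \<open>t < 1\<close> by simp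
  qed simp
  have "g (y + 1 *\<^sub>R d) - g (y + 0 *\<^sub>R d) \<ge> (G (y + 0 *\<^sub>R d) \<bullet> d) * (1 - 0)"
    by (rule convex_on_imp_above_tangent[OF cv]) (use line_deriv[OF g_grad, of y d 0 UNIV] in auto)
  then show ?thesis by (simp add: d_def)
qed

lemma descent:
  fixes g :: "'a::euclidean_space \<Rightarrow> real"
  assumes g_grad: "\<And>u. (g has_derivative (\<lambda>v. G u \<bullet> v)) (at u)"
    and G_lip: "\<And>u v. norm (G u - G v) \<le> L * norm (u - v)"
  shows "g x \<le> g y + G y \<bullet> (x - y) + L / 2 * (norm (x - y))^2"
proof -
  define d where "d = x - y"
  define \<phi> where "\<phi> t = g (y + t *\<^sub>R d) - t * (G y \<bullet> d) - L / 2 * t^2 * (norm d)^2" for t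
  have "\<phi> 1 \<le> \<phi> 0"
  proof (rule DERIV_nonpos_imp_nonincreasing[of 0 1])
    fix t :: real assume t: "0 \<le> t" "t \<le> 1"
    have D: "(\<phi> has_real_derivative (G (y + t *\<^sub>R d) \<bullet> d - G y \<bullet> d - L * t * (norm d)^2)) (at t)"
      unfolding \<phi>_def
      by (rule derivative_eq_intros line_deriv[OF g_grad] | simp)+
    have "G (y + t *\<^sub>R d) \<bullet> d - G y \<bullet> d = (G (y + t *\<^sub>R d) - G y) \<bullet> d" by (simp add: inner_diff_left)
    also have "\<dots> \<le> norm (G (y + t *\<^sub>R d) - G y) * norm d" by (rule norm_cauchy_schwarz)
    also have "\<dots> \<le> (L * norm (t *\<^sub>R d)) * norm d"
      using G_lip[of "y + t *\<^sub>R d" y] by (intro mult_right_mono) auto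
    also have "\<dots> = L * t * (norm d)^2" using t by (simp add: power2_eq_square)
    finally show "\<exists>y. (\<phi> has_real_derivative y) (at t) \<and> y \<le> 0" using D by force
  qed simp
  then show ?thesis by (simp add: \<phi>_def d_def)
qed


lemma theta_next:
  fixes t s :: real
  assumes t: "0 < t" and s: "s = (- (t^2) + sqrt (t^4 + 4 * t^2)) / 2"
  shows "0 < s" "s < 1" "s^2 = (1 - s) * t^2"
proof -
  have q: "(sqrt (t^4 + 4 * t^2))^2 = t^4 + 4 * t^2" by simp
  have "(t^2)^2 < t^4 + 4 * t^2" using t by (simp add: power_mult [symmetric])
  then have g: "t^2 < sqrt (t^4 + 4 * t^2)" by (rule real_less_rsqrt)
  then show "0 < s" using s by simp
  have "sqrt (t^4 + 4 * t^2) < sqrt ((2 + t^2)^2)" by (intro real_sqrt_less_mono) (simp add: power2_eq_square algebra_simps power4_eq_xxxx)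
  then have "sqrt (t^4 + 4 * t^2) < 2 + t^2" using t by simp
  then show "s < 1" using s by simp
  have "2 * s + t^2 = sqrt (t^4 + 4 * t^2)" using s by simp
  then have "(2 * s + t^2)^2 = t^4 + 4 * t^2" using q by simp
  then show "s^2 = (1 - s) * t^2"
    by (simp add: power2_eq_square power4_eq_xxxx algebra_simps)
qed

lemma theta_bound_step:
  fixes t s n :: real
  assumes n: "n \<ge> 2" and t: "0 < t" "t \<le> 2 / n" and s: "0 < s" "s < 1" "s^2 = (1 - s) * t^2"
  shows "s \<le> 2 / (n + 1)"
proof (rule ccontr)
  assume "\<not> s \<le> 2 / (n + 1)"
  then have sg: "2 / (n+1) < s" by simp
  have "t^2 \<le> (2/n)^2" using t by (intro power_mono) auto
  then have "s^2 \<le> (1 - s) * (2/n)^2" using s by (metis mult_left_mono diff_ge_0_iff_ge less_imp_le)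
  also have "\<dots> < (1 - 2/(n+1)) * (2/n)^2" using sg n by (intro mult_strict_right_mono) auto
  finally have A: "s^2 < (1 - 2/(n+1)) * (2/n)^2" .
  have "(2/(n+1))^2 < s^2" using sg n by (intro power_strict_mono) auto
  with A have "(2/(n+1))^2 < (1 - 2/(n+1)) * (2/n)^2" by linarith
  then have B: "(2/(n+1))^2 * ((n+1)^2*n^2) < (1 - 2/(n+1)) * (2/n)^2 * ((n+1)^2*n^2)"
    using n by (intro mult_strict_right_mono) auto
  have C1: "(2/(n+1))^2 * ((n+1)^2*n^2) = 4 * n^2" using n by (simp add: power_divide)
  have C0: "1 - 2/(n+1) = (n-1)/(n+1)" using n by (simp add: field_simps)
  have C2: "(1 - 2/(n+1)) * (2/n)^2 * ((n+1)^2*n^2) = (n - 1) * (n + 1) * 4" using n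
    unfolding C0 by (simp add: power_divide power2_eq_square)
  from B C1 C2 have "4 * n^2 < (n - 1) * (n + 1) * 4" by simp
  then show False by (simp add: algebra_simps power2_eq_square)
qed

lemma norm_sq_convex:
  fixes a c :: "'a::real_inner"
  assumes "0 \<le> t" "t \<le> 1"
  shows "(norm ((1 - t) *\<^sub>R a + t *\<^sub>R c))^2 \<le> (1 - t) * (norm a)^2 + t * (norm c)^2"
proof -
  have "(1 - t) * (norm a)^2 + t * (norm c)^2 - (norm ((1 - t) *\<^sub>R a + t *\<^sub>R c))^2 = t * (1 - t) * (norm (a - c))^2"
    unfolding power2_norm_eq_inner by (simp add: inner_add inner_diff inner_scaleR inner_commute algebra_simps power2_eq_square)
  moreover have "0 \<le> t * (1 - t) * (norm (a - c))^2" using assms by simp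
  ultimately show ?thesis by linarith
qed

lemma norm_sq_expand:
  fixes v w :: "'a::real_inner"
  shows "(norm (v + t *\<^sub>R w))^2 = (norm v)^2 + 2 * t * (v \<bullet> w) + t^2 * (norm w)^2"
  unfolding power2_norm_eq_inner by (simp add: inner_add inner_scaleR inner_commute algebra_simps power2_eq_square)

lemma small_t:
  fixes a c :: real
  assumes "\<And>t. 0 < t \<Longrightarrow> t \<le> 1 \<Longrightarrow> 0 \<le> a + t * c"
  shows "0 \<le> a"
proof (rule ccontr)
  assume na: "\<not> 0 \<le> a"
  show False
  proof (cases "c \<le> 0")
    case True then show ?thesis using assms[of 1] na by simp
  next
    case False
    define t where "t = min 1 (- a / (2 * c))"
    have "a / (2 * c) < 0" using na False by (simp add: divide_neg_pos)
    then have "0 < t" "t \<le> 1" by (auto simp: t_def)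
    moreover have "t * c \<le> - a / (2 * c) * c" using False
      by (intro mult_right_mono) (auto simp: t_def)
    moreover have "- a / (2 * c) * c = - a / 2" using False by simp
    ultimately show False using assms[of t] na by linarith
  qed
qed

lemma min_strong:
  fixes A :: "'a::euclidean_space \<Rightarrow> 'b::euclidean_space" and H :: "'a \<Rightarrow> real" and h :: "'a \<Rightarrow> ereal"
  assumes lin: "linear A"
   and min: "\<And>u. h u \<noteq> \<infinity> \<Longrightarrow> cc \<bullet> zz + H zz + l \<bullet> A zz + be/2*(norm (A zz - b))^2 + M/2*(norm (zz - z0))^2
          \<le> cc \<bullet> u + H u + l \<bullet> A u + be/2*(norm (A u - b))^2 + M/2*(norm (u - z0))^2"
   and hconv: "\<And>a c t. h a \<noteq> \<infinity> \<Longrightarrow> h c \<noteq> \<infinity> \<Longrightarrow> 0 \<le> t \<Longrightarrow> t \<le> 1 \<Longrightarrow>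
          h ((1-t) *\<^sub>R a + t *\<^sub>R c) \<noteq> \<infinity> \<and> H ((1-t) *\<^sub>R a + t *\<^sub>R c) \<le> (1-t)*H a + t*H c"
   and hz: "h zz \<noteq> \<infinity>" and hu: "h u \<noteq> \<infinity>" and be: "be \<ge> 0" and M: "M \<ge> 0"
  shows "cc \<bullet> zz + H zz + l \<bullet> A zz + be/2*(norm (A zz - b))^2 + M/2*(norm (zz - z0))^2
          + be/2*(norm (A (u - zz)))^2 + M/2*(norm (u - zz))^2
        \<le> cc \<bullet> u + H u + l \<bullet> A u + be/2*(norm (A u - b))^2 + M/2*(norm (u - z0))^2"
proof -
  define d where "d = u - zz"
  define P where "P w = cc \<bullet> w + H w + l \<bullet> A w" for w
  define Q where "Q w = be/2*(norm (A w - b))^2 + M/2*(norm (w - z0))^2" for w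
  define Lin where "Lin = be * ((A zz - b) \<bullet> A d) + M * ((zz - z0) \<bullet> d)"
  define Quad where "Quad = be/2*(norm (A d))^2 + M/2*(norm d)^2"
  have Qexp: "Q (zz + t *\<^sub>R d) = Q zz + t * Lin + t^2 * Quad" for t
  proof -
    have "A (zz + t *\<^sub>R d) - b = (A zz - b) + t *\<^sub>R A d"
      using lin by (simp add: linear_add linear_scale)
    moreover have "zz + t *\<^sub>R d - z0 = (zz - z0) + t *\<^sub>R d" by simp
    ultimately show ?thesis unfolding Q_def Lin_def Quad_def
      by (simp only: norm_sq_expand) (simp add: algebra_simps)
  qed
  have ut: "zz + t *\<^sub>R d = (1 - t) *\<^sub>R zz + t *\<^sub>R u" for t
    by (simp add: d_def algebra_simps)
  have Pconv: "h (zz + t *\<^sub>R d) \<noteq> \<infinity> \<and> P (zz + t *\<^sub>R d) \<le> (1 - t) * P zz + t * P u" if "0 \<le> t" "t \<le> 1" for t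
  proof -
    have H1: "h (zz + t *\<^sub>R d) \<noteq> \<infinity> \<and> H (zz + t *\<^sub>R d) \<le> (1-t)*H zz + t*H u"
      unfolding ut using hconv[OF hz hu that] .
    have eA: "A ((1 - t) *\<^sub>R zz + t *\<^sub>R u) = (1 - t) *\<^sub>R A zz + t *\<^sub>R A u"
      using lin by (simp add: linear_add linear_scale)
    have "P (zz + t *\<^sub>R d) - H (zz + t *\<^sub>R d) = (1 - t) * (P zz - H zz) + t * (P u - H u)"
      unfolding P_def ut eA by (simp add: inner_add inner_scaleR algebra_simps)
    then show ?thesis using H1 by (simp add: algebra_simps)
  qed
  have key: "0 \<le> P u - P zz + Lin + t * Quad" if "0 < t" "t \<le> 1" for t
  proof -
    from Pconv[of t] that have hc: "h (zz + t *\<^sub>R d) \<noteq> \<infinity>" and pc: "P (zz + t *\<^sub>R d) \<le> (1 - t) * P zz + t * P u" by auto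
    have "P zz + Q zz \<le> P (zz + t *\<^sub>R d) + Q (zz + t *\<^sub>R d)"
      using min[OF hc] unfolding P_def Q_def by simp
    then have "0 \<le> t * (P u - P zz + Lin + t * Quad)"
      using pc unfolding Qexp by (simp add: algebra_simps power2_eq_square)
    then show ?thesis using that by (simp add: zero_le_mult_iff)
  qed
  have "0 \<le> P u - P zz + Lin"
    using small_t[of "P u - P zz + Lin" Quad] key by (simp add: add.assoc)
  moreover have "Q u = Q zz + Lin + Quad" using Qexp[of 1] by (simp add: d_def)
  ultimately have "P zz + Q zz + Quad \<le> P u + Q u" by linarith
  then show ?thesis unfolding P_def Q_def Quad_def d_def by (simp add: algebra_simps)
qed

lemma arith_step:
  fixes t \<beta> L gx1 gy dlin N p q gx s gs Hx1 Hx Hz Hs lr R Mz1 Mz lx1 lx ls Ex1 Ex \<Lambda>1 \<Lambda> :: real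
  assumes t: "0 < t" "t \<le> 1" and b: "\<beta> = 1 / t" and R: "R \<ge> 0"
   and F1: "gx1 \<le> gy + dlin + L/2*(t^2*N)"
   and F3: "dlin = (1-t)*p + t*q"
   and F4: "gy + p \<le> gx"
   and F5: "gy + s \<le> gs"
   and F6: "Hx1 \<le> (1-t)*Hx + t*Hz"
   and F7: "(q - s) + Hz - Hs + lr + \<beta>*R + L*t/2*N + L*t/2*Mz1 \<le> L*t/2*Mz"
   and F8: "lx1 = (1-t)*lx + t*ls"
   and F9: "Ex1 \<le> (1-t)*Ex + t*R"
   and F10: "\<Lambda>1 = \<Lambda> + 2*\<beta>*(lr - ls) + \<beta>^2*R"
 shows "gx1 + Hx1 - gs - Hs + lx1 + 1/2*Ex1 \<le> (1-t)*(gx + Hx - gs - Hs + lx + 1/2*Ex) + t^2/2*((L*Mz + \<Lambda>) - (L*Mz1 + \<Lambda>1))"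
proof -
  have tb: "t * \<beta> = 1" using t b by simp
  have a7: "t*((q - s) + Hz - Hs + lr + \<beta>*R + L*t/2*N + L*t/2*Mz1) \<le> t*(L*t/2*Mz)"
    using F7 t by (intro mult_left_mono) auto
  have a4: "(1-t)*(gy + p) \<le> (1-t)*gx" using F4 t by (intro mult_left_mono) auto
  have a5: "t*(gy + s) \<le> t*gs" using F5 t by (intro mult_left_mono) auto
  have a9: "t*R \<le> R" using t R by (simp add: mult_left_le_one_le)
  have e10: "t^2/2*((L*Mz + \<Lambda>) - (L*Mz1 + \<Lambda>1)) = t^2/2*L*Mz - t^2/2*L*Mz1 - t*lr + t*ls - R/2"
    unfolding F10 b using t by (simp add: field_simps power2_eq_square)
  have e7: "t*((q - s) + Hz - Hs + lr + \<beta>*R + L*t/2*N + L*t/2*Mz1) = t*(q - s) + t*Hz - t*Hs + t*lr + R + t^2/2*L*N + t^2/2*L*Mz1"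
    using tb by (simp add: algebra_simps power2_eq_square)
  have e7': "t*(L*t/2*Mz) = t^2/2*L*Mz" by (simp add: power2_eq_square)
  have e1: "gy + dlin = (1-t)*(gy + p) + t*(gy + s) + t*(q - s)" unfolding F3 by (simp add: algebra_simps)
  have e2: "L/2*(t^2*N) = t^2/2*L*N" by simp
  have e3: "(1-t)*(gx + Hx - gs - Hs + lx + 1/2*Ex) = (1-t)*gx + (1-t)*Hx - gs - Hs + t*gs + t*Hs + (1-t)*lx + 1/2*((1-t)*Ex)"
    by (simp add: algebra_simps)
  show ?thesis
    unfolding e10 e3 F8
    using a7[unfolded e7 e7'] a4 a5 a9 F1[unfolded e1 e2] F6 F9 by linarith
qed


theorem theorem1:
  fixes g :: "'a::euclidean_space \<Rightarrow> real" and h :: "'a \<Rightarrow> ereal"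
    and G :: "'a \<Rightarrow> 'a" and L :: real
    and A :: "'a \<Rightarrow> 'b::euclidean_space" and b :: 'b
    and xs :: 'a and lams :: 'b
    and x z :: "nat \<Rightarrow> 'a" and lam :: "nat \<Rightarrow> 'b"
    and theta beta :: "nat \<Rightarrow> real" and K :: nat
  defines "f \<equiv> (\<lambda>u. ereal (g u) + h u)"
  assumes g_convex: "convex_on UNIV g"
    and g_grad: "\<And>u. (g has_derivative (\<lambda>v. G u \<bullet> v)) (at u)"
    and L_pos: "L > 0"
    and G_lip: "\<And>u v. norm (G u - G v) \<le> L * norm (u - v)"
    and h_proper: "proper_fun h" and h_convex: "convex_fun h" and h_lsc: "lsc_fun h"
    and A_lin: "linear A"
    and saddle_feas: "A xs = b"
    and saddle_sub: "- adjoint A lams \<in> subdiff f xs"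
    and theta0: "theta 0 = 1"
    and theta_rec: "\<And>k. theta (Suc k) =
          (- ((theta k)^2) + sqrt ((theta k)^4 + 4 * (theta k)^2)) / 2"
    and beta0: "beta 0 = 1"
    and beta_rec: "\<And>k. beta (Suc k) = 1 / theta (Suc k)"
    and z_step: "\<And>k u.
          let y = (1 - theta k) *\<^sub>R x k + theta k *\<^sub>R z k;
              obj = (\<lambda>w. ereal (G y \<bullet> w) + h w + ereal (lam k \<bullet> A w)
                       + ereal (beta k / 2 * (norm (A w - b))^2)
                       + ereal (L * theta k / 2 * (norm (w - z k))^2))
          in obj (z (Suc k)) \<le> obj u"
    and x_step: "\<And>k. x (Suc k) = (1 - theta k) *\<^sub>R x k + theta k *\<^sub>R z (Suc k)"
    and lam_step: "\<And>k. lam (Suc k) = lam k + beta k *\<^sub>R (A (z (Suc k)) - b)"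
    and K_pos: "K > 0"
  shows "f (x (Suc K)) - f xs + ereal (lams \<bullet> (A (x (Suc K)) - b))
           + ereal (1/2 * (norm (A (x (Suc K)) - b))^2)
         \<le> ereal (2 / (real K + 2)^2 * (L * (norm (z 0 - xs))^2 + (norm (lam 0 - lams))^2))"
proof -
  have hne: "h w \<noteq> -\<infinity>" for w using h_proper unfolding proper_fun_def by auto
  obtain w0 where w0: "h w0 \<noteq> \<infinity>" using h_proper unfolding proper_fun_def by auto
  define H where "H w = real_of_ereal (h w)" for w
  have hH: "h w = ereal (H w)" if "h w \<noteq> \<infinity>" for w
    using hne[of w] that by (cases "h w") (auto simp: H_def)
  have hconv: "h ((1-t) *\<^sub>R a + t *\<^sub>R c) \<noteq> \<infinity> \<and> H ((1-t) *\<^sub>R a + t *\<^sub>R c) \<le> (1-t)*H a + t*H c"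
    if "h a \<noteq> \<infinity>" "h c \<noteq> \<infinity>" "0 \<le> t" "t \<le> 1" for a c t
  proof -
    have "h ((1-t) *\<^sub>R a + t *\<^sub>R c) \<le> ereal (1 - t) * h a + ereal t * h c"
      using h_convex that unfolding convex_fun_def by blast
    also have "\<dots> = ereal ((1-t)*H a + t*H c)" using hH[OF that(1)] hH[OF that(2)] by simp
    finally have le: "h ((1-t) *\<^sub>R a + t *\<^sub>R c) \<le> ereal ((1-t)*H a + t*H c)" .
    then have fin: "h ((1-t) *\<^sub>R a + t *\<^sub>R c) \<noteq> \<infinity>" by auto
    show ?thesis using le hH[OF fin] fin by simp
  qed
  have hxs: "h xs \<noteq> \<infinity>"
  proof
    assume inf: "h xs = \<infinity>"
    from saddle_sub have "f xs + ereal ((- adjoint A lams) \<bullet> (w0 - xs)) \<le> f w0"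
      unfolding subdiff_def by blast
    then show False using inf hH[OF w0] unfolding f_def by simp
  qed
  have th: "0 < theta k \<and> theta k \<le> 1" for k
  proof (induction k)
    case 0 then show ?case using theta0 by simp
  next
    case (Suc k)
    then show ?case using theta_next[of "theta k" "theta (Suc k)"] theta_rec[of k] by auto
  qed
  have threl: "theta (Suc k)^2 = (1 - theta (Suc k)) * (theta k)^2" for k
    using theta_next(3)[of "theta k" "theta (Suc k)", OF _ theta_rec[of k]] th[of k] by auto
  have thb: "theta k \<le> 2 / (real k + 2)" for k
  proof (induction k)
    case 0 then show ?case using theta0 by simp
  next
    case (Suc k)
    have "theta (Suc k) \<le> 2 / ((real k + 2) + 1)"
      using theta_bound_step[of "real k + 2" "theta k" "theta (Suc k)"] Suc th[of k] th[of "Suc k"] threl[of k]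
        theta_next(2)[of "theta k" "theta (Suc k)", OF _ theta_rec[of k]]
      by auto
    then show ?case by (simp add: add.commute add.left_commute)
  qed
  have beta_eq: "beta k = 1 / theta k" for k
    by (cases k) (simp_all add: beta0 theta0 beta_rec)
  define y where "y k = (1 - theta k) *\<^sub>R x k + theta k *\<^sub>R z k" for k
  have hz: "h (z (Suc k)) \<noteq> \<infinity>" for k
  proof
    assume inf: "h (z (Suc k)) = \<infinity>"
    from z_step[of k w0] show False using inf hH[OF w0] by (simp add: Let_def)
  qed
  have zmin: "G (y k) \<bullet> z (Suc k) + H (z (Suc k)) + lam k \<bullet> A (z (Suc k)) + beta k/2*(norm (A (z (Suc k)) - b))^2
          + (L * theta k)/2*(norm (z (Suc k) - z k))^2
        \<le> G (y k) \<bullet> u + H u + lam k \<bullet> A u + beta k/2*(norm (A u - b))^2 + (L * theta k)/2*(norm (u - z k))^2"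
    if "h u \<noteq> \<infinity>" for k u
    using z_step[of k u] hH[OF that] hH[OF hz[of k]] unfolding y_def by (simp add: Let_def)
  have hx: "h (x (Suc k)) \<noteq> \<infinity> \<and> H (x (Suc k)) \<le> (1 - theta k) * H (x k) + theta k * H (z (Suc k))" for k
  proof (induction k)
    case 0
    have "x (Suc 0) = z (Suc 0)" using x_step[of 0] theta0 by simp
    then show ?case using hz[of 0] theta0 by simp
  next
    case (Suc k)
    show ?case unfolding x_step[of "Suc k"]
      using hconv[of "x (Suc k)" "z (Suc (Suc k))" "theta (Suc k)"] Suc hz th[of "Suc k"] by auto
  qed
  define Phi where "Phi k = g (x k) + H (x k) - g xs - H xs + lams \<bullet> (A (x k) - b) + 1/2*(norm (A (x k) - b))^2" for k
  define D where "D k = L * (norm (z k - xs))^2 + (norm (lam k - lams))^2" for k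
  have step: "Phi (Suc k) \<le> (1 - theta k) * Phi k + (theta k)^2/2 * (D k - D (Suc k))" for k
  proof -
    define t where "t = theta k"
    define yy where "yy = y k"
    define zk where "zk = z k"
    define z1 where "z1 = z (Suc k)"
    define xk where "xk = x k"
    define x1 where "x1 = x (Suc k)"
    define r where "r = A z1 - b"
    have t01: "0 < t" "t \<le> 1" using th[of k] by (auto simp: t_def)
    have x1eq: "x1 = (1 - t) *\<^sub>R xk + t *\<^sub>R z1" by (simp add: x1_def x_step t_def xk_def z1_def)
    have yyeq: "yy = (1 - t) *\<^sub>R xk + t *\<^sub>R zk" by (simp add: yy_def y_def t_def xk_def zk_def)
    have F1a: "g x1 \<le> g yy + G yy \<bullet> (x1 - yy) + L / 2 * (norm (x1 - yy))^2"
      by (rule descent[OF g_grad G_lip])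
    have "x1 - yy = t *\<^sub>R (z1 - zk)" unfolding x1eq yyeq by (simp add: algebra_simps)
    then have "(norm (x1 - yy))^2 = t^2 * (norm (z1 - zk))^2" by (simp add: power_mult_distrib)
    with F1a have F1: "g x1 \<le> g yy + G yy \<bullet> (x1 - yy) + L/2*(t^2*(norm (z1 - zk))^2)" by simp
    have "x1 - yy = (1 - t) *\<^sub>R (xk - yy) + t *\<^sub>R (z1 - yy)" unfolding x1eq by (simp add: algebra_simps)
    then have F3: "G yy \<bullet> (x1 - yy) = (1 - t) * (G yy \<bullet> (xk - yy)) + t * (G yy \<bullet> (z1 - yy))"
      by (simp add: inner_add inner_scaleR)
    have F4: "g yy + G yy \<bullet> (xk - yy) \<le> g xk" by (rule grad_ineq[OF g_convex g_grad])
    have F5: "g yy + G yy \<bullet> (xs - yy) \<le> g xs" by (rule grad_ineq[OF g_convex g_grad])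
    have F6: "H x1 \<le> (1 - t) * H xk + t * H z1" using hx[of k] by (simp add: x1_def t_def xk_def z1_def)
    have M7: "G yy \<bullet> z1 + H z1 + lam k \<bullet> A z1 + beta k/2*(norm (A z1 - b))^2 + (L*t)/2*(norm (z1 - zk))^2
          + beta k/2*(norm (A (xs - z1)))^2 + (L*t)/2*(norm (xs - z1))^2
        \<le> G yy \<bullet> xs + H xs + lam k \<bullet> A xs + beta k/2*(norm (A xs - b))^2 + (L*t)/2*(norm (xs - zk))^2"
      apply (rule min_strong[where h=h, OF A_lin _ hconv])
      using zmin[of _ k] hz[of k] hxs th[of k] L_pos beta_eq[of k]
      by (auto simp: t_def yy_def z1_def zk_def)
    have e1: "norm (A (xs - z1)) = norm r" using A_lin saddle_feas
      by (simp add: linear_diff r_def norm_minus_commute)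
    have e2: "norm (xs - z1) = norm (z1 - xs)" "norm (xs - zk) = norm (zk - xs)" by (simp_all add: norm_minus_commute)
    have e3: "G yy \<bullet> z1 - G yy \<bullet> xs = G yy \<bullet> (z1 - yy) - G yy \<bullet> (xs - yy)" by (simp add: inner_diff_right)
    have e4: "lam k \<bullet> A z1 - lam k \<bullet> A xs = lam k \<bullet> r" by (simp add: r_def saddle_feas inner_diff_right)
    have e5: "beta k/2*(norm r)^2 + beta k/2*(norm r)^2 = beta k * (norm r)^2" by simp
    have F7: "(G yy \<bullet> (z1 - yy) - G yy \<bullet> (xs - yy)) + H z1 - H xs + lam k \<bullet> r + beta k*(norm r)^2
        + L*t/2*(norm (z1 - zk))^2 + L*t/2*(norm (z1 - xs))^2 \<le> L*t/2*(norm (zk - xs))^2"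
      using M7 e1 e2 e3 e4 e5 saddle_feas by (simp add: r_def[symmetric])
    have eA1: "A x1 = (1 - t) *\<^sub>R A xk + t *\<^sub>R A z1"
      unfolding x1eq by (simp only: linear_add[OF A_lin] linear_scale[OF A_lin])
    have eAx: "A x1 - b = (1 - t) *\<^sub>R (A xk - b) + t *\<^sub>R r"
      unfolding eA1 r_def by (simp add: algebra_simps)
    have F8: "lams \<bullet> (A x1 - b) = (1 - t) * (lams \<bullet> (A xk - b)) + t * (lams \<bullet> r)"
      unfolding eAx by (simp add: inner_add_right)
    have F9: "(norm (A x1 - b))^2 \<le> (1 - t) * (norm (A xk - b))^2 + t * (norm r)^2"
      unfolding eAx using t01 by (intro norm_sq_convex) auto
    have eL: "lam (Suc k) - lams = (lam k - lams) + beta k *\<^sub>R r" by (simp add: lam_step r_def z1_def)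
    have F10: "(norm (lam (Suc k) - lams))^2 = (norm (lam k - lams))^2 + 2 * beta k * (lam k \<bullet> r - lams \<bullet> r) + (beta k)^2 * (norm r)^2"
      unfolding eL norm_sq_expand by (simp add: inner_diff_left)
    have "g x1 + H x1 - g xs - H xs + lams \<bullet> (A x1 - b) + 1/2*(norm (A x1 - b))^2
       \<le> (1-t)*(g xk + H xk - g xs - H xs + lams \<bullet> (A xk - b) + 1/2*(norm (A xk - b))^2)
         + t^2/2*((L*(norm (zk - xs))^2 + (norm (lam k - lams))^2) - (L*(norm (z1 - xs))^2 + (norm (lam (Suc k) - lams))^2))"
      by (rule arith_step[OF t01 beta_eq[of k, folded t_def] _ F1 F3 F4 F5 F6 F7 F8 F9 F10]) simp
    then show ?thesis by (simp add: Phi_def D_def t_def x1_def xk_def zk_def z1_def)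
  qed
  have tele: "Phi (Suc k) / (theta k)^2 + D (Suc k) / 2 \<le> D 0 / 2" for k
  proof (induction k)
    case 0 then show ?case using step[of 0] theta0 by simp
  next
    case (Suc k)
    define t where "t = theta (Suc k)"
    have tp: "0 < t" "t \<le> 1" using th[of "Suc k"] by (auto simp: t_def)
    have tk: "0 < theta k" using th[of k] by auto
    have s: "Phi (Suc (Suc k)) \<le> (1 - t) * Phi (Suc k) + t^2/2 * (D (Suc k) - D (Suc (Suc k)))"
      using step[of "Suc k"] by (simp add: t_def)
    have "Phi (Suc (Suc k)) / t^2 \<le> ((1 - t) * Phi (Suc k) + t^2/2 * (D (Suc k) - D (Suc (Suc k)))) / t^2"
      using s tp by (intro divide_right_mono) auto
    also have "\<dots> = (1 - t) / t^2 * Phi (Suc k) + (D (Suc k) - D (Suc (Suc k))) / 2"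
      using tp by (simp add: field_simps)
    also have "(1 - t) / t^2 = 1 / (theta k)^2"
      using threl[of k] tp tk by (simp add: t_def field_simps)
    finally have "Phi (Suc (Suc k)) / t^2 \<le> Phi (Suc k) / (theta k)^2 + (D (Suc k) - D (Suc (Suc k))) / 2"
      by simp
    moreover have "(D (Suc k) - D (Suc (Suc k))) / 2 = D (Suc k) / 2 - D (Suc (Suc k)) / 2" by simp
    ultimately show ?case using Suc.IH unfolding t_def by linarith
  qed
  have D0: "0 \<le> D 0" "0 \<le> D (Suc K)" using L_pos by (simp_all add: D_def)
  have tK: "0 < theta K" "theta K \<le> 2 / (real K + 2)" using th[of K] thb[of K] by auto
  have "Phi (Suc K) / (theta K)^2 \<le> D 0 / 2" using tele[of K] D0 by linarith
  then have "Phi (Suc K) \<le> (theta K)^2 * (D 0 / 2)" using tK by (simp add: divide_le_eq mult.commute)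
  also have "\<dots> \<le> (2 / (real K + 2))^2 * (D 0 / 2)"
    using tK D0 by (intro mult_right_mono power_mono) auto
  also have "\<dots> = 2 / (real K + 2)^2 * D 0" by (simp add: power_divide)
  finally have main: "Phi (Suc K) \<le> 2 / (real K + 2)^2 * D 0" .
  have fx: "f (x (Suc K)) = ereal (g (x (Suc K)) + H (x (Suc K)))" using hH[of "x (Suc K)"] hx[of K] by (simp add: f_def)
  have fs: "f xs = ereal (g xs + H xs)" using hH[OF hxs] by (simp add: f_def)
  show ?thesis using main unfolding fx fs by (simp add: Phi_def D_def)
qed

end
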